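(* For integers $r\ge 1$ and $n\ge r+1$, $$\mathfrak{q}_{r-1}({\sf T}_n^r)=rn-r^2+1.$$
   Context: A (finite abstract) simplicial complex is a family of subsets of a finite vertex set closed under taking subsets; an $i$-face is a member of cardinality $i+1$; $S_i(K)$ is the set of $i$-faces. For an $i$-face $F$, $d_K(F)$ is the number of $(i+1)$-faces containing $F$; two distinct $i$-faces are up-neighbors if their union is an $(i+1)$-face. The signless up Laplacian $Q_i^{\mathrm{up}}(K)$ is the operator on $\mathbb{R}^{S_i(K)}$ given by $(Q_i^{\mathrm{up}}(K)f)(F)=d_K(F)f(F)+\sum_{F'\text{ up-neighbor of }F}f(F')$, and $\mathfrak{q}_i(K)$ is its largest eigenvalue. The tented complex ${\sf T}_n^r$ is the pure $r$-dimensional complex on vertex set $[n]$ whose facets are the sets $\{n\}\cup F$ with $F$ an $r$-element subset of $[n-1]$ (together with all their subsets). *)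

theory Defs
  imports Complex_Main
begin

definition simplicial_complex :: "'a set set \<Rightarrow> bool" where
  "simplicial_complex K \<longleftrightarrow> finite K \<and> (\<forall>F\<in>K. finite F) \<and> (\<forall>F\<in>K. \<forall>G. G \<subseteq> F \<longrightarrow> G \<in> K)"

definition faces :: "nat \<Rightarrow> 'a set set \<Rightarrow> 'a set set" where
  "faces i K = {F \<in> K. finite F \<and> card F = Suc i}"

definition face_degree :: "nat \<Rightarrow> 'a set set \<Rightarrow> 'a set \<Rightarrow> nat" where
  "face_degree i K F = card {G \<in> faces (Suc i) K. F \<subseteq> G}"

definition up_neighbors :: "nat \<Rightarrow> 'a set set \<Rightarrow> 'a set \<Rightarrow> 'a set set" where
  "up_neighbors i K F = {F' \<in> faces i K. F' \<noteq> F \<and> F \<union> F' \<in> faces (Suc i) K}"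

text \<open>The signless up Laplacian acting on real functions on the i-faces
  (functions are represented as maps on all sets; only values on i-faces matter).\<close>
definition Q_up :: "nat \<Rightarrow> 'a set set \<Rightarrow> ('a set \<Rightarrow> real) \<Rightarrow> 'a set \<Rightarrow> real" where
  "Q_up i K f F = real (face_degree i K F) * f F + (\<Sum>F'\<in>up_neighbors i K F. f F')"

definition Q_up_eigenvalue :: "nat \<Rightarrow> 'a set set \<Rightarrow> real \<Rightarrow> bool" where
  "Q_up_eigenvalue i K \<mu> \<longleftrightarrow>
     (\<exists>f. (\<forall>F. F \<notin> faces i K \<longrightarrow> f F = 0) \<and> (\<exists>F\<in>faces i K. f F \<noteq> 0) \<and>
          (\<forall>F\<in>faces i K. Q_up i K f F = \<mu> * f F))"

definition q_up :: "nat \<Rightarrow> 'a set set \<Rightarrow> real" where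
  "q_up i K = Max {\<mu>. Q_up_eigenvalue i K \<mu>}"

definition tented :: "nat \<Rightarrow> nat \<Rightarrow> nat set set" where
  "tented n r = {G. \<exists>F. F \<subseteq> {1..n-1} \<and> card F = r \<and> G \<subseteq> insert n F}"

end

theory Submission
  imports Defs "HOL-Library.Function_Algebras"
begin


lemma sum_fun_apply': "(sum g T) x = (\<Sum>v\<in>T. g v x)"
  by (induction T rule: infinite_finite_induct) auto

lemma eig_finite:
  fixes L :: "('b \<Rightarrow> real) \<Rightarrow> 'b \<Rightarrow> real" and S :: "'b set"
  assumes finS: "finite S"
    and lin: "\<And>T u F. finite T \<Longrightarrow> F \<in> S \<Longrightarrow> L (\<lambda>x. \<Sum>v\<in>T. u v * v x) F = (\<Sum>v\<in>T. u v * L v F)"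
  shows "finite {\<mu>. \<exists>f. (\<forall>F. F \<notin> S \<longrightarrow> f F = 0) \<and> (\<exists>F\<in>S. f F \<noteq> 0) \<and> (\<forall>F\<in>S. L f F = \<mu> * f F)}"
    (is "finite ?E")
proof -
  interpret fv: vector_space "\<lambda>c (f::'b\<Rightarrow>real) x. c * f x"
    by unfold_locales (auto simp: fun_eq_iff algebra_simps)
  define P where "P = (\<lambda>\<mu> f. (\<forall>F. F \<notin> S \<longrightarrow> f F = 0) \<and> (\<exists>F\<in>S. f F \<noteq> 0) \<and> (\<forall>F\<in>S. L f F = \<mu> * f F))"
  define e where "e = (\<lambda>\<mu>. SOME f. P \<mu> f)"
  have eP: "P \<mu> (e \<mu>)" if "\<mu> \<in> ?E" for \<mu>
  proof -
    have "\<exists>f. P \<mu> f" using that unfolding P_def by simp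
    thus ?thesis unfolding e_def by (rule someI_ex)
  qed
  have uniq: "\<mu> = \<mu>'" if "P \<mu> f" "P \<mu>' f" for \<mu> \<mu>' f
  proof -
    from that(1) obtain F where F: "F \<in> S" "f F \<noteq> 0" unfolding P_def by blast
    have "L f F = \<mu> * f F" "L f F = \<mu>' * f F" using that F unfolding P_def by auto
    thus ?thesis using F by auto
  qed
  have inj: "inj_on e ?E"
  proof (rule inj_onI)
    fix x y assume "x \<in> ?E" "y \<in> ?E" "e x = e y"
    thus "x = y" using eP[of x] eP[of y] uniq[of x "e x" y] by simp
  qed
  define V where "V = e ` ?E"
  have key: "\<forall>u. (\<Sum>v\<in>T. (\<lambda>x. u v * v x)) = 0 \<longrightarrow> (\<forall>v\<in>T. u v = 0)"
    if "finite T" "T \<subseteq> V" for T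
    using that
  proof (induction T rule: finite_induct)
    case empty
    then show ?case by simp
  next
    case (insert a T)
    show ?case
    proof (intro allI impI)
      fix u assume h0: "(\<Sum>v\<in>insert a T. (\<lambda>x. u v * v x)) = 0"
      have h: "u a * a x + (\<Sum>v\<in>T. u v * v x) = 0" for x
        using fun_cong[OF h0, of x] insert.hyps by (simp add: sum_fun_apply')
      define ev where "ev = (\<lambda>v. inv_into ?E e v)"
      have Pv: "P (ev v) v" if "v \<in> V" for v
      proof -
        have m: "ev v \<in> ?E" using that unfolding V_def ev_def by (rule inv_into_into)
        have "e (ev v) = v" using that unfolding V_def ev_def by (rule f_inv_into_f)
        thus ?thesis using eP[OF m] by simp
      qed
      have evd: "ev v \<noteq> ev a" if "v \<in> T" for v
      proof
        assume "ev v = ev a"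
        moreover have "v \<in> V" "a \<in> V" using insert that by auto
        ultimately have "e (ev v) = e (ev a)" by simp
        moreover have "e (ev v) = v" using \<open>v \<in> V\<close> unfolding V_def ev_def by (rule f_inv_into_f)
        moreover have "e (ev a) = a" using \<open>a \<in> V\<close> unfolding V_def ev_def by (rule f_inv_into_f)
        ultimately have "v = a" by simp
        thus False using that insert.hyps(2) by simp
      qed
      have "(\<Sum>v\<in>T. (u v * (ev v - ev a)) * v x) = 0" for x
      proof (cases "x \<in> S")
        case True
        have "L (\<lambda>x. \<Sum>v\<in>insert a T. u v * v x) x = (\<Sum>v\<in>insert a T. u v * L v x)"
          using lin insert.hyps True by blast
        also have "\<dots> = (\<Sum>v\<in>insert a T. u v * (ev v * v x))"
          using Pv insert.prems True unfolding P_def by (intro sum.cong) auto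
        finally have A: "L (\<lambda>x. \<Sum>v\<in>insert a T. u v * v x) x = (\<Sum>v\<in>insert a T. u v * (ev v * v x))" .
        have "L (\<lambda>x. \<Sum>v\<in>insert a T. u v * v x) x = L (\<lambda>x. 0 * 0) x"
          using h insert.hyps by (simp add: fun_eq_iff)
        also have "\<dots> = 0" using lin[of "{}" x "\<lambda>_. 0"] True by simp
        finally have B: "(\<Sum>v\<in>insert a T. u v * (ev v * v x)) = 0" using A by simp
        hence "u a * (ev a * a x) + (\<Sum>v\<in>T. u v * (ev v * v x)) = 0" using insert.hyps by simp
        moreover have "ev a * (u a * a x + (\<Sum>v\<in>T. u v * v x)) = 0" using h by simp
        ultimately have "(\<Sum>v\<in>T. u v * (ev v * v x)) - ev a * (\<Sum>v\<in>T. u v * v x) = 0"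
          by (simp add: algebra_simps)
        thus ?thesis by (simp add: sum_distrib_left sum_subtractf[symmetric] algebra_simps)
      next
        case False
        have "v x = 0" if "v \<in> T" for v using Pv[of v] that insert.prems False unfolding P_def by auto
        thus ?thesis by (intro sum.neutral ballI) simp
      qed
      hence "(\<Sum>v\<in>T. (\<lambda>x. (u v * (ev v - ev a)) * v x)) = 0"
        by (intro ext) (simp only: sum_fun_apply' zero_fun_apply)
      moreover have "T \<subseteq> V" using insert.prems by simp
      note IH = insert.IH[OF this]
      ultimately have z: "\<forall>v\<in>T. u v * (ev v - ev a) = 0"
        using IH[rule_format, of "\<lambda>v. u v * (ev v - ev a)"] by blast
      hence zT: "\<forall>v\<in>T. u v = 0" using evd by auto
      obtain F where "a F \<noteq> 0" using Pv[of a] insert.prems unfolding P_def by auto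
      moreover have "u a * a F = 0" using h[of F] zT by simp
      ultimately have "u a = 0" by simp
      with zT show "\<forall>v\<in>insert a T. u v = 0" by auto
    qed
  qed
  have indep: "fv.independent V"
    unfolding fv.independent_explicit_finite_subsets using key by blast
  define D where "D = (\<lambda>F. \<lambda>x::'b. if x = F then (1::real) else 0) ` S"
  have span: "V \<subseteq> fv.span D"
  proof
    fix f assume "f \<in> V"
    then obtain \<mu> where "\<mu> \<in> ?E" "f = e \<mu>" unfolding V_def by auto
    hence Pf: "P \<mu> f" using eP by auto
    have "f = (\<Sum>F\<in>S. (\<lambda>x. f F * (if x = F then 1 else 0)))"
    proof
      fix x
      show "f x = (\<Sum>F\<in>S. (\<lambda>x. f F * (if x = F then 1 else 0))) x"
        using Pf finS unfolding P_def by (cases "x \<in> S") (auto simp: sum_fun_apply' if_distrib cong: if_cong)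
    qed
    also have "\<dots> \<in> fv.span D"
      by (intro fv.span_sum fv.span_scale fv.span_base) (auto simp: D_def)
    finally show "f \<in> fv.span D" .
  qed
  have "finite V" using fv.independent_span_bound[OF _ indep span] finS D_def by auto
  thus ?thesis unfolding V_def using inj finite_imageD by blast
qed



lemma Q_up_lin:
  assumes "finite T"
  shows "Q_up i K (\<lambda>x. \<Sum>v\<in>T. u v * v x) F = (\<Sum>v\<in>T. u v * Q_up i K v F)"
proof -
  have "(\<Sum>F'\<in>up_neighbors i K F. \<Sum>v\<in>T. u v * v F') = (\<Sum>v\<in>T. \<Sum>F'\<in>up_neighbors i K F. u v * v F')"
    by (rule sum.swap)
  thus ?thesis unfolding Q_up_def
    by (simp add: sum_distrib_left sum.distrib algebra_simps)
qed

lemma union_face: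
  assumes F: "F \<in> faces i K" and F': "F' \<in> faces i K" and ne: "F' \<noteq> F"
    and G: "G \<in> faces (Suc i) K" and sub: "F \<subseteq> G" "F' \<subseteq> G"
  shows "G = F \<union> F'"
proof -
  have fin: "finite G" "finite F" "finite F'" using F F' G by (auto simp: faces_def)
  have cF: "card F = Suc i" "card F' = Suc i" "card G = Suc (Suc i)" using F F' G by (auto simp: faces_def)
  have "\<not> F' \<subseteq> F"
  proof
    assume "F' \<subseteq> F"
    hence "F' = F" using card_subset_eq[OF fin(2)] cF by metis
    thus False using ne by simp
  qed
  hence "F \<subset> F \<union> F'" by auto
  hence "card F < card (F \<union> F')" using fin by (intro psubset_card_mono) auto
  hence "card G \<le> card (F \<union> F')" using cF by simp
  thus ?thesis using card_seteq[OF fin(1)] sub by (metis Un_least)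
qed

lemma coface_form:
  assumes finK: "finite K" and F: "F \<in> faces i K"
  shows "Q_up i K f F = (\<Sum>G\<in>{G\<in>faces (Suc i) K. F \<subseteq> G}. \<Sum>F'\<in>{F'\<in>faces i K. F' \<subseteq> G}. f F')"
proof -
  let ?C = "{G\<in>faces (Suc i) K. F \<subseteq> G}"
  let ?S = "faces i K"
  have finS: "finite ?S" "finite ?C" using finK by (auto simp: faces_def)
  have "(\<Sum>G\<in>?C. \<Sum>F'\<in>{F'\<in>?S. F' \<subseteq> G}. f F') =
        (\<Sum>G\<in>?C. f F + (\<Sum>F'\<in>?S. if F' \<subseteq> G \<and> F' \<noteq> F then f F' else 0))"
  proof (rule sum.cong[OF refl])
    fix G assume G: "G \<in> ?C"
    have "F \<in> {F'\<in>?S. F' \<subseteq> G}" using G F by auto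
    hence "(\<Sum>F'\<in>{F'\<in>?S. F' \<subseteq> G}. f F') = f F + (\<Sum>F'\<in>{F'\<in>?S. F' \<subseteq> G} - {F}. f F')"
      using finS by (subst sum.remove) auto
    also have "(\<Sum>F'\<in>{F'\<in>?S. F' \<subseteq> G} - {F}. f F') = (\<Sum>F'\<in>{F'\<in>?S. F' \<subseteq> G \<and> F' \<noteq> F}. f F')"
      by (rule sum.cong) auto
    also have "\<dots> = (\<Sum>F'\<in>?S. if F' \<subseteq> G \<and> F' \<noteq> F then f F' else 0)"
      by (rule sum.inter_filter[OF finS(1)])
    finally show "(\<Sum>F'\<in>{F'\<in>?S. F' \<subseteq> G}. f F') = f F + (\<Sum>F'\<in>?S. if F' \<subseteq> G \<and> F' \<noteq> F then f F' else 0)" .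
  qed
  also have "\<dots> = real (card ?C) * f F + (\<Sum>F'\<in>?S. \<Sum>G\<in>?C. if F' \<subseteq> G \<and> F' \<noteq> F then f F' else 0)"
    by (simp add: sum.distrib, subst sum.swap, simp)
  also have "(\<Sum>F'\<in>?S. \<Sum>G\<in>?C. if F' \<subseteq> G \<and> F' \<noteq> F then f F' else 0) =
             (\<Sum>F'\<in>?S. if F' \<in> up_neighbors i K F then f F' else 0)"
  proof (rule sum.cong[OF refl])
    fix F' assume F': "F' \<in> ?S"
    have "{G\<in>?C. F' \<subseteq> G \<and> F' \<noteq> F} = (if F' \<in> up_neighbors i K F then {F \<union> F'} else {})"
    proof (cases "F' \<in> up_neighbors i K F")
      case True
      hence U: "F \<union> F' \<in> faces (Suc i) K" and ne: "F' \<noteq> F" by (auto simp: up_neighbors_def)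
      have "{G\<in>?C. F' \<subseteq> G \<and> F' \<noteq> F} = {F \<union> F'}"
      proof (rule equalityI)
        show "{G\<in>?C. F' \<subseteq> G \<and> F' \<noteq> F} \<subseteq> {F \<union> F'}"
        proof
          fix G assume "G \<in> {G\<in>?C. F' \<subseteq> G \<and> F' \<noteq> F}"
          hence "G \<in> faces (Suc i) K" "F \<subseteq> G" "F' \<subseteq> G" by simp_all
          from union_face[OF F F' ne this] show "G \<in> {F \<union> F'}" by simp
        qed
        show "{F \<union> F'} \<subseteq> {G\<in>?C. F' \<subseteq> G \<and> F' \<noteq> F}" using U ne by simp
      qed
      thus ?thesis using True by simp
    next
      case False
      have "{G\<in>?C. F' \<subseteq> G \<and> F' \<noteq> F} = {}"
      proof (rule ccontr)
        assume "{G\<in>?C. F' \<subseteq> G \<and> F' \<noteq> F} \<noteq> {}"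
        then obtain G where G3: "G \<in> faces (Suc i) K" "F \<subseteq> G" "F' \<subseteq> G" and ne: "F' \<noteq> F" by blast
        moreover from union_face[OF F F' ne G3] have "G = F \<union> F'" .
        ultimately have "F' \<in> up_neighbors i K F" using F' unfolding up_neighbors_def by simp
        thus False using False by simp
      qed
      thus ?thesis using False by simp
    qed
    have "(\<Sum>G\<in>?C. if F' \<subseteq> G \<and> F' \<noteq> F then f F' else 0) = (\<Sum>G\<in>{G\<in>?C. F' \<subseteq> G \<and> F' \<noteq> F}. f F')"
      by (rule sum.inter_filter[OF finS(2), symmetric])
    also have "\<dots> = (if F' \<in> up_neighbors i K F then f F' else 0)"
      using \<open>{G\<in>?C. F' \<subseteq> G \<and> F' \<noteq> F} = _\<close> by simp
    finally show "(\<Sum>G\<in>?C. if F' \<subseteq> G \<and> F' \<noteq> F then f F' else 0) = (if F' \<in> up_neighbors i K F then f F' else 0)" .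
  qed
  also have "\<dots> = (\<Sum>F'\<in>{F'\<in>?S. F' \<in> up_neighbors i K F}. f F')"
    by (rule sum.inter_filter[OF finS(1), symmetric])
  also have "{F'\<in>?S. F' \<in> up_neighbors i K F} = up_neighbors i K F"
    by (auto simp: up_neighbors_def)
  finally show ?thesis unfolding Q_up_def face_degree_def by simp
qed



lemma bound_lemma:
  assumes finK: "finite K"
    and vpos: "\<And>F. F \<in> faces i K \<Longrightarrow> v F > 0"
    and Wv: "\<And>F. F \<in> faces i K \<Longrightarrow>
       (\<Sum>G\<in>{G\<in>faces (Suc i) K. F \<subseteq> G}. \<Sum>F'\<in>{F'\<in>faces i K. F' \<subseteq> G}. v F') = lam * v F"
    and eig: "Q_up_eigenvalue i K \<mu>"
  shows "\<mu> \<le> lam"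
proof -
  let ?S = "faces i K"
  let ?C = "\<lambda>F. {G\<in>faces (Suc i) K. F \<subseteq> G}"
  let ?N = "\<lambda>G. {F'\<in>faces i K. F' \<subseteq> G}"
  have finS: "finite ?S" using finK by (auto simp: faces_def)
  obtain f where f0: "\<forall>F. F \<notin> ?S \<longrightarrow> f F = 0" and f1: "\<exists>F\<in>?S. f F \<noteq> 0"
    and f2: "\<forall>F\<in>?S. Q_up i K f F = \<mu> * f F"
    using eig unfolding Q_up_eigenvalue_def by blast
  obtain F1 where F1: "F1 \<in> ?S" "f F1 \<noteq> 0" using f1 by blast
  define c where "c = Max ((\<lambda>F. \<bar>f F\<bar> / v F) ` ?S)"
  have cge: "\<bar>f F\<bar> / v F \<le> c" if "F \<in> ?S" for F
    unfolding c_def using finS that by (intro Max_ge) auto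
  have cle: "\<bar>f F\<bar> \<le> c * v F" if "F \<in> ?S" for F
    using cge[OF that] vpos[OF that] by (simp add: divide_le_eq)
  obtain F0 where F0: "F0 \<in> ?S" "\<bar>f F0\<bar> / v F0 = c"
  proof -
    have "(\<lambda>F. \<bar>f F\<bar> / v F) ` ?S \<noteq> {}" using F1 by blast
    hence "c \<in> (\<lambda>F. \<bar>f F\<bar> / v F) ` ?S" unfolding c_def using finS by (intro Max_in) auto
    thus ?thesis using that by blast
  qed
  have "0 < \<bar>f F1\<bar> / v F1" using F1 vpos[OF F1(1)] by simp
  hence cpos: "c > 0" using cge[OF F1(1)] by linarith
  have fF0: "\<bar>f F0\<bar> = c * v F0" using F0 vpos[OF F0(1)] by (simp add: field_simps)
  have "\<bar>\<mu>\<bar> * \<bar>f F0\<bar> = \<bar>Q_up i K f F0\<bar>" using f2 F0 by (simp add: abs_mult)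
  also have "\<dots> = \<bar>\<Sum>G\<in>?C F0. \<Sum>F'\<in>?N G. f F'\<bar>" using coface_form[OF finK F0(1)] by simp
  also have "\<dots> \<le> (\<Sum>G\<in>?C F0. \<bar>\<Sum>F'\<in>?N G. f F'\<bar>)" by (rule sum_abs)
  also have "\<dots> \<le> (\<Sum>G\<in>?C F0. \<Sum>F'\<in>?N G. \<bar>f F'\<bar>)" by (intro sum_mono sum_abs)
  also have "\<dots> \<le> (\<Sum>G\<in>?C F0. \<Sum>F'\<in>?N G. c * v F')" by (intro sum_mono cle) auto
  also have "\<dots> = c * (lam * v F0)" using Wv[OF F0(1)] by (simp only: sum_distrib_left[symmetric])
  also have "\<dots> = lam * \<bar>f F0\<bar>" using fF0 by simp
  finally have "\<bar>\<mu>\<bar> * \<bar>f F0\<bar> \<le> lam * \<bar>f F0\<bar>" .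
  moreover have "\<bar>f F0\<bar> > 0" using fF0 cpos vpos[OF F0(1)] by simp
  ultimately have "\<bar>\<mu>\<bar> \<le> lam" by simp
  thus ?thesis by simp
qed



context
  fixes r n :: nat
  assumes r1: "r \<ge> 1" and rn: "n \<ge> r + 1"
begin

lemma memK: "G \<in> tented n r \<longleftrightarrow> (\<exists>F. F \<subseteq> {1..n-1} \<and> card F = r \<and> G \<subseteq> insert n F)"
  unfolding tented_def by simp

lemma finK: "finite (tented n r)"
proof (rule finite_subset)
  show "tented n r \<subseteq> Pow {1..n}"
  proof
    fix G assume "G \<in> tented n r"
    then obtain F where "F \<subseteq> {1..n-1}" "G \<subseteq> insert n F" using memK by blast
    moreover have "{1..n-1} \<subseteq> {1..n}" by auto
    moreover have "n \<in> {1..n}" using rn by simp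
    ultimately show "G \<in> Pow {1..n}" by blast
  qed
qed simp

lemma nS: "S \<subseteq> {1..n-1} \<Longrightarrow> n \<notin> S"
  using rn by auto

lemma finS: "S \<subseteq> {1..n-1} \<Longrightarrow> finite S"
  by (rule finite_subset) auto

lemma faces_r: "G \<in> faces r (tented n r) \<longleftrightarrow> (\<exists>S. S \<subseteq> {1..n-1} \<and> card S = r \<and> G = insert n S)"
proof
  assume "G \<in> faces r (tented n r)"
  hence G: "G \<in> tented n r" "finite G" "card G = Suc r" unfolding faces_def by auto
  then obtain S where S: "S \<subseteq> {1..n-1}" "card S = r" "G \<subseteq> insert n S" using memK by blast
  have "finite (insert n S)" using finS[OF S(1)] by simp
  moreover have "card (insert n S) = Suc r" using S finS[OF S(1)] nS[OF S(1)] by simp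
  ultimately have "G = insert n S" using card_seteq S(3) G(3) by (metis order_refl)
  thus "\<exists>S. S \<subseteq> {1..n-1} \<and> card S = r \<and> G = insert n S" using S by blast
next
  assume "\<exists>S. S \<subseteq> {1..n-1} \<and> card S = r \<and> G = insert n S"
  then obtain S where S: "S \<subseteq> {1..n-1}" "card S = r" "G = insert n S" by blast
  have "G \<in> tented n r" using S memK by blast
  moreover have "finite G" "card G = Suc r" using S finS[OF S(1)] nS[OF S(1)] by simp_all
  ultimately show "G \<in> faces r (tented n r)" unfolding faces_def by simp
qed

lemma Suc_r1: "Suc (r - 1) = r" using r1 by simp

lemma faces_r1: "F \<in> faces (r-1) (tented n r) \<Longrightarrow> F \<subseteq> {1..n} \<and> card F = r \<and> finite F"
proof -
  assume "F \<in> faces (r-1) (tented n r)"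
  hence F: "F \<in> tented n r" "finite F" "card F = r" unfolding faces_def using Suc_r1 by auto
  then obtain S where S: "S \<subseteq> {1..n-1}" "F \<subseteq> insert n S" using memK by blast
  have "S \<subseteq> {1..n}" using S(1) by (auto simp: subset_iff)
  hence "insert n S \<subseteq> {1..n}" using rn by simp
  thus ?thesis using F S by blast
qed

lemma degree:
  assumes F: "F \<in> faces (r-1) (tented n r)"
  shows "face_degree (r-1) (tented n r) F = (if n \<in> F then n - r else 1)"
proof -
  have F1: "F \<subseteq> {1..n}" "card F = r" "finite F" using faces_r1[OF F] by auto
  have fd: "face_degree (r-1) (tented n r) F = card {G\<in>faces r (tented n r). F \<subseteq> G}"
    unfolding face_degree_def Suc_r1 ..
  show ?thesis
  proof (cases "n \<in> F")
    case False
    have Fs: "F \<subseteq> {1..n-1}"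
    proof
      fix x assume "x \<in> F"
      hence "1 \<le> x" "x \<le> n" "x \<noteq> n" using F1(1) False by auto
      thus "x \<in> {1..n-1}" by simp
    qed
    have "{G\<in>faces r (tented n r). F \<subseteq> G} = {insert n F}"
    proof (rule equalityI)
      show "{G\<in>faces r (tented n r). F \<subseteq> G} \<subseteq> {insert n F}"
      proof
        fix G assume "G \<in> {G\<in>faces r (tented n r). F \<subseteq> G}"
        hence G: "G \<in> faces r (tented n r)" "F \<subseteq> G" by auto
        then obtain S where S: "S \<subseteq> {1..n-1}" "card S = r" "G = insert n S" using faces_r by blast
        have "F \<subseteq> S" using G(2) S(3) False by auto
        hence "F = S" using card_subset_eq[OF finS[OF S(1)]] S(2) F1(2) by metis
        thus "G \<in> {insert n F}" using S by simp
      qed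
      show "{insert n F} \<subseteq> {G\<in>faces r (tented n r). F \<subseteq> G}"
        using faces_r Fs F1(2) by blast
    qed
    thus ?thesis using fd False by simp
  next
    case True
    define H where "H = F - {n}"
    have Hs: "H \<subseteq> {1..n-1}" using F1(1) unfolding H_def by auto
    have cH: "card H = r - 1" using F1 True unfolding H_def by simp
    have FH: "F = insert n H" using True unfolding H_def by auto
    have finH: "finite H" using finS[OF Hs] .
    have eq: "{G\<in>faces r (tented n r). F \<subseteq> G} = (\<lambda>x. insert x F) ` ({1..n-1} - H)"
    proof (rule equalityI)
      show "{G\<in>faces r (tented n r). F \<subseteq> G} \<subseteq> (\<lambda>x. insert x F) ` ({1..n-1} - H)"
      proof
        fix G assume "G \<in> {G\<in>faces r (tented n r). F \<subseteq> G}"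
        hence G: "G \<in> faces r (tented n r)" "F \<subseteq> G" by auto
        then obtain S where S: "S \<subseteq> {1..n-1}" "card S = r" "G = insert n S" using faces_r by blast
        have HS: "H \<subseteq> S" using G(2) S(3) unfolding H_def by auto
        have "H \<noteq> S" using cH S(2) r1 by auto
        then obtain x where x: "x \<in> S" "x \<notin> H" using HS by blast
        have "insert x H \<subseteq> S" using x HS by simp
        moreover have "card (insert x H) = r" using x finH cH r1 by simp
        ultimately have "insert x H = S" using card_subset_eq[OF finS[OF S(1)]] S(2) by metis
        hence "G = insert x F" using S(3) FH by auto
        moreover have "x \<in> {1..n-1} - H" using x S(1) by auto
        ultimately show "G \<in> (\<lambda>x. insert x F) ` ({1..n-1} - H)" by blast
      qed
      show "(\<lambda>x. insert x F) ` ({1..n-1} - H) \<subseteq> {G\<in>faces r (tented n r). F \<subseteq> G}"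
      proof
        fix G assume "G \<in> (\<lambda>x. insert x F) ` ({1..n-1} - H)"
        then obtain x where x: "x \<in> {1..n-1}" "x \<notin> H" "G = insert x F" by auto
        have "insert x H \<subseteq> {1..n-1}" using x Hs by simp
        moreover have "card (insert x H) = r" using x finH cH r1 by simp
        moreover have "G = insert n (insert x H)" using x(3) FH by auto
        ultimately have "G \<in> faces r (tented n r)" using faces_r by blast
        thus "G \<in> {G\<in>faces r (tented n r). F \<subseteq> G}" using x(3) by auto
      qed
    qed
    have inj: "inj_on (\<lambda>x. insert x F) ({1..n-1} - H)"
    proof (rule inj_onI)
      fix x y assume x: "x \<in> {1..n-1} - H" and y: "y \<in> {1..n-1} - H" and e: "insert x F = insert y F"
      have "x \<notin> F" using x nS[of "{x}"] FH by auto
      moreover have "x \<in> insert y F" using e by auto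
      ultimately show "x = y" by simp
    qed
    have "card ({1..n-1} - H) = card {1..n-1} - card H"
      using Hs by (intro card_Diff_subset finH)
    also have "\<dots> = n - r" using cH r1 rn by simp
    finally have "card ({1..n-1} - H) = n - r" .
    thus ?thesis using fd eq card_image[OF inj] True by simp
  qed
qed

lemma W:
  assumes G: "G \<in> faces r (tented n r)"
  shows "(\<Sum>F'\<in>{F'\<in>faces (r-1) (tented n r). F' \<subseteq> G}. real (face_degree (r-1) (tented n r) F'))
         = real (1 + r * (n - r))"
proof -
  let ?K = "tented n r"
  obtain S where S: "S \<subseteq> {1..n-1}" "card S = r" "G = insert n S" using G faces_r by blast
  have finG: "finite G" and cG: "card G = Suc r" using S finS[OF S(1)] nS[OF S(1)] by simp_all
  have GK: "G \<in> ?K" using G unfolding faces_def by simp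
  have sub: "G - {y} \<in> faces (r-1) ?K" if "y \<in> G" for y
  proof -
    have "G - {y} \<in> ?K" using S memK by blast
    moreover have "card (G - {y}) = Suc (r - 1)" using that cG finG Suc_r1 by simp
    ultimately show ?thesis unfolding faces_def using finG by simp
  qed
  have eq: "{F'\<in>faces (r-1) ?K. F' \<subseteq> G} = (\<lambda>y. G - {y}) ` G"
  proof (rule equalityI)
    show "{F'\<in>faces (r-1) ?K. F' \<subseteq> G} \<subseteq> (\<lambda>y. G - {y}) ` G"
    proof
      fix F' assume "F' \<in> {F'\<in>faces (r-1) ?K. F' \<subseteq> G}"
      hence F': "F' \<in> faces (r-1) ?K" "F' \<subseteq> G" by auto
      have cF: "card F' = r" using faces_r1[OF F'(1)] by simp
      have "F' \<noteq> G" using cF cG by auto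
      then obtain y where y: "y \<in> G" "y \<notin> F'" using F'(2) by blast
      have "F' \<subseteq> G - {y}" using y F'(2) by auto
      moreover have "card (G - {y}) = r" using y cG finG by simp
      ultimately have "F' = G - {y}" using card_subset_eq[of "G - {y}" F'] finG cF by simp
      thus "F' \<in> (\<lambda>y. G - {y}) ` G" using y by blast
    qed
    show "(\<lambda>y. G - {y}) ` G \<subseteq> {F'\<in>faces (r-1) ?K. F' \<subseteq> G}" using sub by auto
  qed
  have inj: "inj_on (\<lambda>y. G - {y}) G"
    by (rule inj_onI) auto
  let ?d = "\<lambda>F'. real (face_degree (r-1) ?K F')"
  have "(\<Sum>F'\<in>{F'\<in>faces (r-1) ?K. F' \<subseteq> G}. ?d F') = (\<Sum>y\<in>G. ?d (G - {y}))"
    unfolding eq by (rule sum.reindex_cong[OF inj refl refl])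
  also have "\<dots> = ?d (G - {n}) + (\<Sum>y\<in>S. ?d (G - {y}))"
    using S finS[OF S(1)] nS[OF S(1)] by simp
  also have "?d (G - {n}) = 1"
  proof -
    have "G - {n} = S" using S nS[OF S(1)] by auto
    moreover have "n \<notin> S" using nS[OF S(1)] .
    moreover have "G - {n} \<in> faces (r-1) ?K" by (rule sub) (simp add: S(3))
    ultimately show ?thesis using degree by simp
  qed
  also have "(\<Sum>y\<in>S. ?d (G - {y})) = (\<Sum>y\<in>S. real (n - r))"
  proof (rule sum.cong[OF refl])
    fix y assume y: "y \<in> S"
    have "n \<in> G - {y}" using y S nS[OF S(1)] by auto
    moreover have "G - {y} \<in> faces (r-1) ?K" using sub S y by simp
    ultimately show "?d (G - {y}) = real (n - r)" using degree by simp
  qed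
  also have "\<dots> = real r * real (n - r)" using S(2) by simp
  finally show ?thesis by simp
qed

end



theorem mainTheorem5:
  fixes r n :: nat
  assumes "r \<ge> 1" and "n \<ge> r + 1"
  shows "q_up (r - 1) (tented n r) = real r * real n - (real r)^2 + 1"
proof -
  note r1 = assms(1) and rn = assms(2)
  let ?K = "tented n r"
  let ?S = "faces (r-1) ?K"
  define lam where "lam = real r * real n - (real r)^2 + 1"
  have lam_eq: "lam = real (1 + r * (n - r))"
    using rn unfolding lam_def by (simp add: of_nat_diff algebra_simps power2_eq_square)
  define v where "v F = real (face_degree (r-1) ?K F)" for F
  have fK: "finite ?K" using finK[OF r1 rn] .
  have finSS: "finite ?S" using fK by (auto simp: faces_def)
  have Suc: "Suc (r-1) = r" using r1 by simp
  have vpos: "v F > 0" if "F \<in> ?S" for F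
    using degree[OF r1 rn that] rn unfolding v_def by simp
  have Wv: "(\<Sum>G\<in>{G\<in>faces (Suc (r-1)) ?K. F \<subseteq> G}. \<Sum>F'\<in>{F'\<in>?S. F' \<subseteq> G}. v F') = lam * v F"
    if "F \<in> ?S" for F
  proof -
    have "(\<Sum>G\<in>{G\<in>faces (Suc (r-1)) ?K. F \<subseteq> G}. \<Sum>F'\<in>{F'\<in>?S. F' \<subseteq> G}. v F')
        = (\<Sum>G\<in>{G\<in>faces r ?K. F \<subseteq> G}. lam)"
      unfolding Suc v_def lam_eq by (rule sum.cong[OF refl]) (rule W[OF r1 rn], simp)
    also have "\<dots> = lam * v F" unfolding v_def face_degree_def Suc by simp
    finally show ?thesis .
  qed
  have bound: "\<mu> \<le> lam" if "Q_up_eigenvalue (r-1) ?K \<mu>" for \<mu>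
    by (rule bound_lemma[OF fK vpos Wv that])
  have eigl: "Q_up_eigenvalue (r-1) ?K lam"
  proof -
    define f where "f F = (if F \<in> ?S then v F else 0)" for F
    have A:  "\<forall>F. F \<notin> ?S \<longrightarrow> f F = 0" unfolding f_def by simp
    have F0: "{1..r} \<in> ?S"
    proof -
      have "{1..r} \<subseteq> {1..n-1}" using rn by auto
      hence "{1..r} \<in> ?K" unfolding memK[OF r1 rn] by (intro exI[of _ "{1..r}"]) auto
      thus ?thesis unfolding faces_def using Suc by simp
    qed
    have B: "\<exists>F\<in>?S. f F \<noteq> 0"
    proof
      show "f {1..r} \<noteq> 0" using F0 vpos[OF F0] unfolding f_def by simp
    qed (rule F0)
    have C: "\<forall>F\<in>?S. Q_up (r-1) ?K f F = lam * f F"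
    proof
      fix F assume F: "F \<in> ?S"
      have "Q_up (r-1) ?K f F = (\<Sum>G\<in>{G\<in>faces (Suc (r-1)) ?K. F \<subseteq> G}. \<Sum>F'\<in>{F'\<in>?S. F' \<subseteq> G}. f F')"
        by (rule coface_form[OF fK F])
      also have "\<dots> = (\<Sum>G\<in>{G\<in>faces (Suc (r-1)) ?K. F \<subseteq> G}. \<Sum>F'\<in>{F'\<in>?S. F' \<subseteq> G}. v F')"
        unfolding f_def by (intro sum.cong refl) simp
      also have "\<dots> = lam * v F" by (rule Wv[OF F])
      finally show "Q_up (r-1) ?K f F = lam * f F" using F unfolding f_def by simp
    qed
    show ?thesis unfolding Q_up_eigenvalue_def using A B C by blast
  qed
  have fin: "finite {\<mu>. Q_up_eigenvalue (r-1) ?K \<mu>}"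
    unfolding Q_up_eigenvalue_def
    by (rule eig_finite[OF finSS Q_up_lin])
  have "q_up (r-1) ?K = lam"
    unfolding q_up_def by (rule Max_eqI[OF fin]) (use bound eigl in auto)
  thus ?thesis unfolding lam_def .
qed

end
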